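(* Let $T$ be a complete theory with monster model $\mathcal{U}$, $A\subseteq\mathcal{U}$ small, $\mu\in\mathfrak{M}_x(\mathcal{U})$, $\nu\in\mathfrak{M}_y(\mathcal{U})$, and suppose $\lambda\in\mathfrak{M}_{xy}(A)$ witnesses $\mu\geq_{\mathbb{E},A}\nu$. Then for any $\omega\in\operatorname{E}(\lambda,\mu)$, any $\varphi(y)\in\mathcal{L}_y(\mathcal{U})$ and any $\epsilon>0$, there exist $\gamma^-(x,y),\gamma^+(x,y)\in\mathbb{B}_{xy}(A)$ such that (1) $\gamma^-(x,y)\subseteq(\varphi(y)\wedge x=x)\subseteq\gamma^+(x,y)$; (2) $\omega(\gamma^+(x,y))-\omega(\gamma^-(x,y))<\epsilon$; (3) $|\omega(\gamma^{\dagger}(x,y))-\nu(\varphi(y))|<\epsilon$ for $\dagger\in\{+,-\}$.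
   Context: For $B\subseteq\mathcal{U}$, $\mathcal{L}_x(B)$ is the Boolean algebra of formulas in $x$ with parameters from $B$ modulo $T$, identified with $B$-definable sets, and embedded in $\mathcal{L}_{xy}(B)$ via $\varphi(x)\mapsto\varphi(x)\wedge y=y$; $\mathfrak{M}_x(B)$ is the set of finitely additive probability measures on $\mathcal{L}_x(B)$. For $\omega\in\mathfrak{M}_{xy}(B)$, $\pi_x(\omega)(\varphi(x))=\omega(\varphi(x)\wedge y=y)$ (similarly $\pi_y$); $\omega|_C$ is restriction. $\operatorname{E}(\lambda,\mu)=\{\omega\in\mathfrak{M}_{xy}(\mathcal{U}):\omega|_A=\lambda,\pi_x(\omega)=\mu\}$. $\lambda$ witnesses $\mu\geq_{\mathbb{E},A}\nu$ means $\pi_x(\lambda)=\mu|_A$ and $\pi_y(\omega)=\nu$ for all $\omega\in\operatorname{E}(\lambda,\mu)$. $\mathbb{B}_{xy}(A)$ is the Boolean subalgebra of $\mathcal{L}_{xy}(\mathcal{U})$ generated by $\{\varphi(x)\wedge y=y:\varphi(x)\in\mathcal{L}_x(\mathcal{U})\}\cup\mathcal{L}_{xy}(A)$. *)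

theory Defs
  imports Complex_Main
begin

datatype ('f,'u) trm = Var nat | Par 'u | App 'f "('f,'u) trm list"

datatype ('f,'r,'u) fm =
    FBot
  | FEq "('f,'u) trm" "('f,'u) trm"
  | FRel 'r "('f,'u) trm list"
  | FNeg "('f,'r,'u) fm"
  | FConj "('f,'r,'u) fm" "('f,'r,'u) fm"
  | FEx nat "('f,'r,'u) fm"

text \<open>A structure (the monster model) whose universe is the whole type 'u.\<close>
record ('f,'r,'u) struc =
  fun_ar  :: "'f \<Rightarrow> nat"
  rel_ar  :: "'r \<Rightarrow> nat"
  fun_int :: "'f \<Rightarrow> 'u list \<Rightarrow> 'u"
  rel_int :: "'r \<Rightarrow> 'u list \<Rightarrow> bool"

fun wf_trm :: "('f \<Rightarrow> nat) \<Rightarrow> ('f,'u) trm \<Rightarrow> bool" where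
  "wf_trm ar (Var i) = True"
| "wf_trm ar (Par a) = True"
| "wf_trm ar (App f ts) = (length ts = ar f \<and> list_all (wf_trm ar) ts)"

fun fv_trm :: "('f,'u) trm \<Rightarrow> nat set" where
  "fv_trm (Var i) = {i}"
| "fv_trm (Par a) = {}"
| "fv_trm (App f ts) = (\<Union>t\<in>set ts. fv_trm t)"

fun par_trm :: "('f,'u) trm \<Rightarrow> 'u set" where
  "par_trm (Var i) = {}"
| "par_trm (Par a) = {a}"
| "par_trm (App f ts) = (\<Union>t\<in>set ts. par_trm t)"

fun eval_trm :: "('f,'r,'u) struc \<Rightarrow> (nat \<Rightarrow> 'u) \<Rightarrow> ('f,'u) trm \<Rightarrow> 'u" where
  "eval_trm M e (Var i) = e i"
| "eval_trm M e (Par a) = a"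
| "eval_trm M e (App f ts) = fun_int M f (map (eval_trm M e) ts)"

fun wf_fm :: "('f,'r,'u) struc \<Rightarrow> ('f,'r,'u) fm \<Rightarrow> bool" where
  "wf_fm M FBot = True"
| "wf_fm M (FEq s t) = (wf_trm (fun_ar M) s \<and> wf_trm (fun_ar M) t)"
| "wf_fm M (FRel r ts) = (length ts = rel_ar M r \<and> list_all (wf_trm (fun_ar M)) ts)"
| "wf_fm M (FNeg \<phi>) = wf_fm M \<phi>"
| "wf_fm M (FConj \<phi> \<psi>) = (wf_fm M \<phi> \<and> wf_fm M \<psi>)"
| "wf_fm M (FEx i \<phi>) = wf_fm M \<phi>"

fun fv_fm :: "('f,'r,'u) fm \<Rightarrow> nat set" where
  "fv_fm FBot = {}"
| "fv_fm (FEq s t) = fv_trm s \<union> fv_trm t"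
| "fv_fm (FRel r ts) = (\<Union>t\<in>set ts. fv_trm t)"
| "fv_fm (FNeg \<phi>) = fv_fm \<phi>"
| "fv_fm (FConj \<phi> \<psi>) = fv_fm \<phi> \<union> fv_fm \<psi>"
| "fv_fm (FEx i \<phi>) = fv_fm \<phi> - {i}"

fun par_fm :: "('f,'r,'u) fm \<Rightarrow> 'u set" where
  "par_fm FBot = {}"
| "par_fm (FEq s t) = par_trm s \<union> par_trm t"
| "par_fm (FRel r ts) = (\<Union>t\<in>set ts. par_trm t)"
| "par_fm (FNeg \<phi>) = par_fm \<phi>"
| "par_fm (FConj \<phi> \<psi>) = par_fm \<phi> \<union> par_fm \<psi>"
| "par_fm (FEx i \<phi>) = par_fm \<phi>"

fun sat :: "('f,'r,'u) struc \<Rightarrow> (nat \<Rightarrow> 'u) \<Rightarrow> ('f,'r,'u) fm \<Rightarrow> bool" where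
  "sat M e FBot = False"
| "sat M e (FEq s t) = (eval_trm M e s = eval_trm M e t)"
| "sat M e (FRel r ts) = rel_int M r (map (eval_trm M e) ts)"
| "sat M e (FNeg \<phi>) = (\<not> sat M e \<phi>)"
| "sat M e (FConj \<phi> \<psi>) = (sat M e \<phi> \<and> sat M e \<psi>)"
| "sat M e (FEx i \<phi>) = (\<exists>a. sat M (e(i := a)) \<phi>)"

definition formula_in :: "('f,'r,'u) struc \<Rightarrow> nat \<Rightarrow> 'u set \<Rightarrow> ('f,'r,'u) fm \<Rightarrow> bool" where
  "formula_in M m B \<phi> \<longleftrightarrow> wf_fm M \<phi> \<and> fv_fm \<phi> \<subseteq> {..<m} \<and> par_fm \<phi> \<subseteq> B"

section \<open>Definable sets (formulas modulo T identified with definable sets)\<close>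

text \<open>L_x(B) for an m-tuple of variables x (variables 0..m-1): subsets of U^m.\<close>
definition Ldef :: "('f,'r,'u) struc \<Rightarrow> nat \<Rightarrow> 'u set \<Rightarrow> 'u list set set" where
  "Ldef M m B = (\<lambda>\<phi>. {a. length a = m \<and> sat M (\<lambda>i. a ! i) \<phi>}) ` {\<phi>. formula_in M m B \<phi>}"

text \<open>L_xy(B), x an n-tuple (variables 0..n-1), y a k-tuple (variables n..n+k-1).\<close>
definition Ldef2 :: "('f,'r,'u) struc \<Rightarrow> nat \<Rightarrow> nat \<Rightarrow> 'u set \<Rightarrow> ('u list \<times> 'u list) set set" where
  "Ldef2 M n k B = (\<lambda>\<phi>. {(a, b). length a = n \<and> length b = k \<and> sat M (\<lambda>i. (a @ b) ! i) \<phi>})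
      ` {\<phi>. formula_in M (n + k) B \<phi>}"

definition top2 :: "nat \<Rightarrow> nat \<Rightarrow> ('u list \<times> 'u list) set" where
  "top2 n k = {(a, b). length a = n \<and> length b = k}"

text \<open>Embedding phi(x) |-> phi(x) /\ y=y, and psi(y) |-> psi(y) /\ x=x.\<close>
definition cyl_x :: "nat \<Rightarrow> 'u list set \<Rightarrow> ('u list \<times> 'u list) set" where
  "cyl_x k S = {(a, b). a \<in> S \<and> length b = k}"

definition cyl_y :: "nat \<Rightarrow> 'u list set \<Rightarrow> ('u list \<times> 'u list) set" where
  "cyl_y n S = {(a, b). length a = n \<and> b \<in> S}"

definition fa_prob :: "'a set set \<Rightarrow> 'a set \<Rightarrow> ('a set \<Rightarrow> real) \<Rightarrow> bool" where
  "fa_prob L tp m \<longleftrightarrow> tp \<in> L \<and> m tp = 1 \<and> (\<forall>S\<in>L. 0 \<le> m S) \<and>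
     (\<forall>S\<in>L. \<forall>T\<in>L. S \<inter> T = {} \<longrightarrow> m (S \<union> T) = m S + m T)"

text \<open>M_x(B): finitely additive probability measures on L_x(B) (values outside L_x(B) irrelevant).\<close>
definition Meas :: "('f,'r,'u) struc \<Rightarrow> nat \<Rightarrow> 'u set \<Rightarrow> ('u list set \<Rightarrow> real) \<Rightarrow> bool" where
  "Meas M m B \<mu> \<longleftrightarrow> fa_prob (Ldef M m B) {a. length a = m} \<mu>"

definition Meas2 :: "('f,'r,'u) struc \<Rightarrow> nat \<Rightarrow> nat \<Rightarrow> 'u set \<Rightarrow> (('u list \<times> 'u list) set \<Rightarrow> real) \<Rightarrow> bool" where
  "Meas2 M n k B \<omega> \<longleftrightarrow> fa_prob (Ldef2 M n k B) (top2 n k) \<omega>"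

definition E_set :: "('f,'r,'u) struc \<Rightarrow> nat \<Rightarrow> nat \<Rightarrow> 'u set
    \<Rightarrow> (('u list \<times> 'u list) set \<Rightarrow> real) \<Rightarrow> ('u list set \<Rightarrow> real)
    \<Rightarrow> (('u list \<times> 'u list) set \<Rightarrow> real) set" where
  "E_set M n k A lam \<mu> = {\<omega>. Meas2 M n k UNIV \<omega>
      \<and> (\<forall>S\<in>Ldef2 M n k A. \<omega> S = lam S)
      \<and> (\<forall>S\<in>Ldef M n UNIV. \<omega> (cyl_x k S) = \<mu> S)}"

definition witnesses :: "('f,'r,'u) struc \<Rightarrow> nat \<Rightarrow> nat \<Rightarrow> 'u set
    \<Rightarrow> (('u list \<times> 'u list) set \<Rightarrow> real) \<Rightarrow> ('u list set \<Rightarrow> real) \<Rightarrow> ('u list set \<Rightarrow> real) \<Rightarrow> bool" where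
  "witnesses M n k A lam \<mu> \<nu> \<longleftrightarrow>
     (\<forall>S\<in>Ldef M n A. lam (cyl_x k S) = \<mu> S) \<and>
     (\<forall>\<omega>\<in>E_set M n k A lam \<mu>. \<forall>S\<in>Ldef M k UNIV. \<omega> (cyl_y n S) = \<nu> S)"

inductive_set Bxy :: "('f,'r,'u) struc \<Rightarrow> nat \<Rightarrow> nat \<Rightarrow> 'u set \<Rightarrow> ('u list \<times> 'u list) set set"
  for M n k A where
  cyl: "S \<in> Ldef M n UNIV \<Longrightarrow> cyl_x k S \<in> Bxy M n k A"
| par: "S \<in> Ldef2 M n k A \<Longrightarrow> S \<in> Bxy M n k A"
| top: "top2 n k \<in> Bxy M n k A"
| compl: "S \<in> Bxy M n k A \<Longrightarrow> top2 n k - S \<in> Bxy M n k A"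
| inter: "S \<in> Bxy M n k A \<Longrightarrow> T \<in> Bxy M n k A \<Longrightarrow> S \<inter> T \<in> Bxy M n k A"

end

theory Submission
  imports Defs "HOL-Analysis.Analysis"
begin

definition balg :: "'a set set \<Rightarrow> 'a set \<Rightarrow> bool" where
  "balg B \<Omega> \<longleftrightarrow> \<Omega> \<in> B \<and> (\<forall>X\<in>B. X \<subseteq> \<Omega>) \<and> (\<forall>X\<in>B. \<Omega> - X \<in> B) \<and> (\<forall>X\<in>B. \<forall>Y\<in>B. X \<inter> Y \<in> B)"

lemma balg_empty: "balg B \<Omega> \<Longrightarrow> {} \<in> B"
  unfolding balg_def by (metis Diff_cancel)

lemma balg_union: assumes "balg B \<Omega>" "X \<in> B" "Y \<in> B" shows "X \<union> Y \<in> B"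
proof -
  have "X \<union> Y = \<Omega> - ((\<Omega> - X) \<inter> (\<Omega> - Y))" using assms unfolding balg_def by blast
  thus ?thesis using assms unfolding balg_def by metis
qed

lemma balg_Union: assumes "balg B \<Omega>" "finite D" "D \<subseteq> B" shows "\<Union>D \<in> B"
  using assms(2,3) by (induction D rule: finite_induct) (auto intro: balg_union[OF assms(1)] balg_empty[OF assms(1)])

lemma balg_Inter: assumes "balg B \<Omega>" "finite D" "D \<subseteq> B" shows "\<Omega> \<inter> \<Inter>D \<in> B"
  using assms(2,3)
proof (induction D rule: finite_induct)
  case empty then show ?case using assms(1) unfolding balg_def by simp
next
  case (insert x F)
  then have "\<Omega> \<inter> \<Inter>(insert x F) = x \<inter> (\<Omega> \<inter> \<Inter>F)" by auto
  then show ?case using insert assms(1) unfolding balg_def by auto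
qed

lemma fap_empty: assumes "balg B \<Omega>" "fa_prob B \<Omega> P" shows "P {} = 0"
proof -
  have "P ({} \<union> {}) = P {} + P {}" using assms balg_empty[OF assms(1)] unfolding fa_prob_def by blast
  thus ?thesis by simp
qed

lemma fap_sum: assumes "balg B \<Omega>" "fa_prob B \<Omega> P" "finite D" "D \<subseteq> B"
    "\<forall>C\<in>D. \<forall>C'\<in>D. C \<noteq> C' \<longrightarrow> C \<inter> C' = {}"
  shows "P (\<Union>D) = (\<Sum>C\<in>D. P C)"
  using assms(3-5)
proof (induction D rule: finite_induct)
  case empty then show ?case using fap_empty[OF assms(1,2)] by simp
next
  case (insert x F)
  have xB: "x \<in> B" and FB: "F \<subseteq> B" using insert(4) by auto
  have dF: "\<forall>C\<in>F. \<forall>C'\<in>F. C \<noteq> C' \<longrightarrow> C \<inter> C' = {}" using insert(5) by blast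
  have u: "\<Union>F \<in> B" by (rule balg_Union[OF assms(1) insert(1) FB])
  have d: "x \<inter> \<Union>F = {}"
  proof -
    have "\<forall>C\<in>F. x \<inter> C = {}" using insert(2,5) by (metis insertCI)
    then show ?thesis by blast
  qed
  have "P (\<Union>(insert x F)) = P (x \<union> \<Union>F)" by simp
  also have "\<dots> = P x + P (\<Union>F)" using assms(2) u d xB unfolding fa_prob_def by blast
  also have "\<dots> = P x + (\<Sum>C\<in>F. P C)" using insert(3)[OF FB dF] by simp
  finally show ?case using insert by simp
qed

lemma finite_step:
  assumes alg: "balg B \<Omega>" and P: "fa_prob B \<Omega> P" and fin: "finite Bs" and sub: "Bs \<subseteq> B"
    and inner: "\<forall>G\<in>B. G \<subseteq> S \<longrightarrow> P G \<le> d"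
  shows "\<exists>Q. (\<forall>X. 0 \<le> Q X \<and> Q X \<le> 1) \<and> (\<forall>X Y. X \<inter> Y = {} \<longrightarrow> Q (X \<union> Y) = Q X + Q Y)
            \<and> (\<forall>X\<in>Bs. Q X = P X) \<and> Q S \<le> d"
proof -
  define atm where "atm x = {y\<in>\<Omega>. \<forall>G\<in>Bs. y\<in>G \<longleftrightarrow> x\<in>G}" for x
  define Cs where "Cs = atm ` \<Omega>"
  have Om: "\<Omega> \<in> B" "\<forall>X\<in>B. X \<subseteq> \<Omega>" using alg unfolding balg_def by auto
  have "Cs \<subseteq> (\<lambda>T. {y\<in>\<Omega>. \<forall>G\<in>Bs. y\<in>G \<longleftrightarrow> G\<in>T}) ` Pow Bs"
  proof
    fix C assume "C \<in> Cs"
    then obtain x where "C = atm x" unfolding Cs_def by auto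
    then have "C = (\<lambda>T. {y\<in>\<Omega>. \<forall>G\<in>Bs. y\<in>G \<longleftrightarrow> G\<in>T}) {G\<in>Bs. x\<in>G}" unfolding atm_def by auto
    then show "C \<in> (\<lambda>T. {y\<in>\<Omega>. \<forall>G\<in>Bs. y\<in>G \<longleftrightarrow> G\<in>T}) ` Pow Bs" by blast
  qed
  then have finC: "finite Cs" using fin by (meson finite_Pow_iff finite_imageI finite_subset)
  have CsB: "Cs \<subseteq> B"
  proof
    fix C assume "C \<in> Cs"
    then obtain x where C: "C = atm x" unfolding Cs_def by auto
    have "atm x = \<Omega> \<inter> \<Inter>((\<lambda>G. if x\<in>G then G else \<Omega> - G) ` Bs)" unfolding atm_def by auto
    moreover have "(\<lambda>G. if x\<in>G then G else \<Omega> - G) ` Bs \<subseteq> B" using sub alg unfolding balg_def by auto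
    ultimately show "C \<in> B" using C balg_Inter[OF alg] fin by simp
  qed
  have disj: "\<forall>C\<in>Cs. \<forall>C'\<in>Cs. C \<noteq> C' \<longrightarrow> C \<inter> C' = {}"
    unfolding Cs_def atm_def by blast
  have nonempty: "\<forall>C\<in>Cs. C \<noteq> {}" unfolding Cs_def atm_def by blast
  have UCs: "\<Union>Cs = \<Omega>" unfolding Cs_def atm_def by blast
  have split: "\<forall>X\<in>Bs. \<forall>C\<in>Cs. C \<subseteq> X \<or> C \<inter> X = {}" unfolding Cs_def atm_def by blast
  define r where "r C = (if C \<subseteq> S then (SOME y. y\<in>C) else (SOME y. y \<in> C - S))" for C
  have rCS: "r C \<in> C \<and> (r C \<in> S \<longleftrightarrow> C \<subseteq> S)" if "C \<in> Cs" for C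
  proof (cases "C \<subseteq> S")
    case True
    then have "r C = (SOME y. y \<in> C)" unfolding r_def by simp
    then have "r C \<in> C" using nonempty that by (simp add: some_in_eq)
    then show ?thesis using True by auto
  next
    case False
    then have "C - S \<noteq> {}" by auto
    moreover have "r C = (SOME y. y \<in> C - S)" using False unfolding r_def by simp
    ultimately have "r C \<in> C - S" by (metis some_in_eq)
    then show ?thesis using False by auto
  qed
  have rC: "r C \<in> C" if "C \<in> Cs" for C using rCS[OF that] by blast
  have rS: "r C \<in> S \<longleftrightarrow> C \<subseteq> S" if "C \<in> Cs" for C using rCS[OF that] by blast
  define Q where "Q X = (\<Sum>C\<in>Cs. if r C \<in> X then P C else 0)" for X
  have Pnn: "\<forall>C\<in>Cs. 0 \<le> P C" using P CsB unfolding fa_prob_def by auto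
  have sum1: "(\<Sum>C\<in>Cs. P C) = 1"
    using fap_sum[OF alg P finC CsB disj] UCs P unfolding fa_prob_def by simp
  have Qsub: "Q X = (\<Sum>C\<in>{C\<in>Cs. r C \<in> X}. P C)" for X
    unfolding Q_def using finC by (simp add: sum.inter_filter)
  have Pof: "P (\<Union>{C\<in>Cs. p C}) = (\<Sum>C\<in>{C\<in>Cs. p C}. P C)" for p
    by (rule fap_sum[OF alg P]) (use finC CsB disj in auto)
  have q01: "0 \<le> Q X \<and> Q X \<le> 1" for X
  proof
    show "0 \<le> Q X" unfolding Q_def using Pnn by (auto intro: sum_nonneg)
    have "Q X \<le> (\<Sum>C\<in>Cs. P C)" unfolding Q_def using Pnn by (auto intro: sum_mono)
    then show "Q X \<le> 1" using sum1 by simp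
  qed
  have qadd: "Q (X \<union> Y) = Q X + Q Y" if "X \<inter> Y = {}" for X Y
  proof -
    have "Q (X \<union> Y) = (\<Sum>C\<in>Cs. (if r C \<in> X then P C else 0) + (if r C \<in> Y then P C else 0))"
      unfolding Q_def using that by (intro sum.cong) auto
    then show ?thesis unfolding Q_def by (simp add: sum.distrib)
  qed
  have qB: "Q X = P X" if "X \<in> Bs" for X
  proof -
    have "r C \<in> X \<longleftrightarrow> C \<subseteq> X" if C: "C \<in> Cs" for C
    proof -
      have "C \<subseteq> X \<or> C \<inter> X = {}" using split \<open>X \<in> Bs\<close> C by blast
      moreover have "r C \<in> C" using rC[OF C] .
      ultimately show ?thesis by blast
    qed
    then have e: "{C\<in>Cs. r C \<in> X} = {C\<in>Cs. C \<subseteq> X}" by auto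
    have XO: "X \<subseteq> \<Omega>" using sub that Om by blast
    have "\<Union>{C\<in>Cs. C \<subseteq> X} = X"
    proof
      show "X \<subseteq> \<Union>{C\<in>Cs. C \<subseteq> X}"
      proof
        fix x assume x: "x \<in> X"
        then obtain C where C: "C \<in> Cs" "x \<in> C" using XO UCs by blast
        then have "C \<subseteq> X" using split that x by blast
        then show "x \<in> \<Union>{C\<in>Cs. C \<subseteq> X}" using C by blast
      qed
    qed blast
    then show ?thesis using Qsub[of X] e Pof[of "\<lambda>C. C \<subseteq> X"] by simp
  qed
  have qS: "Q S \<le> d"
  proof -
    have e: "{C\<in>Cs. r C \<in> S} = {C\<in>Cs. C \<subseteq> S}" using rS by blast
    have "\<Union>{C\<in>Cs. C \<subseteq> S} \<in> B" by (rule balg_Union[OF alg]) (use finC CsB in auto)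
    moreover have "\<Union>{C\<in>Cs. C \<subseteq> S} \<subseteq> S" by blast
    ultimately have "P (\<Union>{C\<in>Cs. C \<subseteq> S}) \<le> d" using inner by blast
    then show ?thesis using Qsub[of S] e Pof[of "\<lambda>C. C \<subseteq> S"] by simp
  qed
  have G: "(\<forall>X. 0 \<le> Q X \<and> Q X \<le> 1) \<and> (\<forall>X Y. X \<inter> Y = {} \<longrightarrow> Q (X \<union> Y) = Q X + Q Y)
            \<and> (\<forall>X\<in>Bs. Q X = P X) \<and> Q S \<le> d"
  proof (intro conjI)
    show "\<forall>X. 0 \<le> Q X \<and> Q X \<le> 1" proof fix X :: "'a set" show "0 \<le> Q X \<and> Q X \<le> 1" by (rule q01) qed
    show "\<forall>X Y. X \<inter> Y = {} \<longrightarrow> Q (X \<union> Y) = Q X + Q Y"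
    proof (intro allI impI) fix X Y :: "'a set" assume "X \<inter> Y = {}" then show "Q (X \<union> Y) = Q X + Q Y" by (rule qadd) qed
    show "\<forall>X\<in>Bs. Q X = P X" proof fix X assume "X \<in> Bs" then show "Q X = P X" by (rule qB) qed
    show "Q S \<le> d" by (rule qS)
  qed
  show ?thesis apply (rule exI[where x=Q]) by (fact G)
qed

lemma ext_step:
  assumes alg: "balg B \<Omega>" and P: "fa_prob B \<Omega> P"
    and inner: "\<forall>G\<in>B. G \<subseteq> S \<longrightarrow> P G \<le> d"
  shows "\<exists>Q. (\<forall>X. 0 \<le> Q X) \<and> (\<forall>X Y. X \<inter> Y = {} \<longrightarrow> Q (X \<union> Y) = Q X + Q Y)
            \<and> (\<forall>X\<in>B. Q X = P X) \<and> Q S \<le> d"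
proof -
  define Tp where "Tp = product_topology (\<lambda>_::'a set. top_of_set {0..1::real}) UNIV"
  have cs: "compact_space Tp" unfolding Tp_def
    by (simp add: compact_space_product_topology compact_space_subtopology)
  have tsp: "topspace Tp = {f. \<forall>X. f X \<in> {0..1}}" unfolding Tp_def by (auto simp: PiE_def Pi_def)
  have proj: "continuous_map Tp euclideanreal (\<lambda>f. f X)" for X
  proof -
    have "continuous_map Tp (top_of_set {0..1}) (\<lambda>f. f X)" unfolding Tp_def
      by (rule continuous_map_product_projection) simp
    then show ?thesis by (simp add: continuous_map_in_subtopology)
  qed
  have cl: "closedin Tp {f\<in>topspace Tp. g f \<in> C}" if "continuous_map Tp euclideanreal g" "closed C" for g C
    by (rule closedin_continuous_map_preimage) (use that in auto)
  define K1 where "K1 X = {f\<in>topspace Tp. f X \<in> {P X}}" for X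
  define K2 where "K2 XY = {f\<in>topspace Tp. f (fst XY \<union> snd XY) - (f (fst XY) + f (snd XY)) \<in> {0}}" for XY
  define K3 where "K3 = {f\<in>topspace Tp. f S \<in> {..d}}"
  define U where "U = K1 ` B \<union> K2 ` {XY. fst XY \<inter> snd XY = {}} \<union> {K3}"
  have clU: "\<forall>C\<in>U. closedin Tp C"
  proof
    fix C assume "C \<in> U"
    then consider (a) X where "C = K1 X" | (b) XY where "C = K2 XY" | (c) "C = K3" unfolding U_def by blast
    then show "closedin Tp C"
    proof cases
      case a show ?thesis unfolding a K1_def by (rule cl[OF proj]) simp
    next
      case b show ?thesis unfolding b K2_def by (rule cl) (intro continuous_map_diff continuous_map_add proj, simp)
    next
      case c show ?thesis unfolding c K3_def by (rule cl[OF proj]) simp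
    qed
  qed
  have fip: "\<Inter>F \<noteq> {}" if F: "finite F" "F \<subseteq> U" for F
  proof -
    have "F \<inter> K1 ` B \<subseteq> K1 ` B" "finite (F \<inter> K1 ` B)" using F by auto
    then obtain Bs where Bs: "Bs \<subseteq> B" "finite Bs" "F \<inter> K1 ` B = K1 ` Bs"
      by (metis finite_subset_image)
    obtain Q where Q: "\<forall>X. 0 \<le> Q X \<and> Q X \<le> 1" "\<forall>X Y. X \<inter> Y = {} \<longrightarrow> Q (X \<union> Y) = Q X + Q Y"
       "\<forall>X\<in>Bs. Q X = P X" "Q S \<le> d"
      using finite_step[OF alg P Bs(2) Bs(1) inner] by blast
    have Qt: "Q \<in> topspace Tp" using Q(1) tsp by auto
    have "Q \<in> C" if C: "C \<in> F" for C
    proof -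
      have "C \<in> U" using C F by auto
      then consider (a) X where "C = K1 X" "X \<in> B" | (b) XY where "C = K2 XY" "fst XY \<inter> snd XY = {}"
          | (c) "C = K3" unfolding U_def by blast
      then show ?thesis
      proof cases
        case a
        then have "C \<in> K1 ` Bs" using C Bs(3) by blast
        then obtain X' where "X' \<in> Bs" "C = K1 X'" by blast
        then show ?thesis using Q(3) Qt unfolding K1_def by auto
      next
        case b then show ?thesis using Q(2) Qt unfolding K2_def by auto
      next
        case c then show ?thesis using Q(4) Qt unfolding K3_def by auto
      qed
    qed
    then show ?thesis by blast
  qed
  have "\<Inter>U \<noteq> {}" using cs clU fip unfolding compact_space_fip by blast
  then obtain Q where Q: "Q \<in> \<Inter>U" by blast
  have "Q \<in> K3" using Q unfolding U_def by blast
  then have Qt: "Q \<in> topspace Tp" and QS: "Q S \<le> d" unfolding K3_def by auto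
  have G: "(\<forall>X. 0 \<le> Q X) \<and> (\<forall>X Y. X \<inter> Y = {} \<longrightarrow> Q (X \<union> Y) = Q X + Q Y)
            \<and> (\<forall>X\<in>B. Q X = P X) \<and> Q S \<le> d"
  proof (intro conjI)
    show "\<forall>X. 0 \<le> Q X" using Qt tsp by auto
    show "\<forall>X Y. X \<inter> Y = {} \<longrightarrow> Q (X \<union> Y) = Q X + Q Y"
    proof (intro allI impI)
      fix X Y :: "'a set" assume "X \<inter> Y = {}"
      then have "K2 (X, Y) \<in> U" unfolding U_def by auto
      then have "Q \<in> K2 (X, Y)" using Q by blast
      then show "Q (X \<union> Y) = Q X + Q Y" unfolding K2_def by auto
    qed
    show "\<forall>X\<in>B. Q X = P X"
    proof
      fix X assume "X \<in> B"
      then have "K1 X \<in> U" unfolding U_def by auto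
      then have "Q \<in> K1 X" using Q by blast
      then show "Q X = P X" unfolding K1_def by auto
    qed
    show "Q S \<le> d" by (rule QS)
  qed
  show ?thesis apply (rule exI[where x=Q]) by (fact G)
qed


lemma eval_trm_cong: "(\<forall>i\<in>fv_trm t. e i = e' i) \<Longrightarrow> eval_trm M e t = eval_trm M e' t"
proof (induction t)
  case (App f ts)
  have "map (eval_trm M e) ts = map (eval_trm M e') ts"
    using App by (auto simp: map_eq_conv)
  then show ?case by (metis eval_trm.simps(3))
qed auto

lemma sat_cong: "(\<forall>i\<in>fv_fm \<phi>. e i = e' i) \<Longrightarrow> sat M e \<phi> = sat M e' \<phi>"
proof (induction \<phi> arbitrary: e e')
  case (FEq s t) then show ?case using eval_trm_cong[of s e e' M] eval_trm_cong[of t e e' M] by simp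
next
  case (FRel r ts)
  have "map (eval_trm M e) ts = map (eval_trm M e') ts"
    using FRel by (auto intro!: map_cong eval_trm_cong)
  then show ?case by (metis sat.simps(3))
next
  case (FConj \<phi>1 \<phi>2)
  have "sat M e \<phi>1 = sat M e' \<phi>1" using FConj.prems by (intro FConj.IH(1)) auto
  moreover have "sat M e \<phi>2 = sat M e' \<phi>2" using FConj.prems by (intro FConj.IH(2)) auto
  ultimately show ?case by simp
next
  case (FEx i \<phi>)
  have "sat M (e(i := a)) \<phi> = sat M (e'(i := a)) \<phi>" for a
    using FEx.prems by (intro FEx.IH) auto
  then show ?case by simp
qed auto

lemma Ldef2_compl: assumes "S \<in> Ldef2 M n k C" shows "top2 n k - S \<in> Ldef2 M n k C"
proof -
  obtain \<psi> where \<psi>: "formula_in M (n + k) C \<psi>"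
    "S = {(a, b). length a = n \<and> length b = k \<and> sat M (\<lambda>i. (a @ b) ! i) \<psi>}"
    using assms unfolding Ldef2_def by auto
  have "formula_in M (n + k) C (FNeg \<psi>)" using \<psi>(1) unfolding formula_in_def by simp
  moreover have "top2 n k - S = {(a, b). length a = n \<and> length b = k \<and> sat M (\<lambda>i. (a @ b) ! i) (FNeg \<psi>)}"
    using \<psi>(2) unfolding top2_def by auto
  ultimately show ?thesis unfolding Ldef2_def by blast
qed

lemma Ldef2_inter: assumes "S \<in> Ldef2 M n k C" "T \<in> Ldef2 M n k C" shows "S \<inter> T \<in> Ldef2 M n k C"
proof -
  obtain \<psi> where \<psi>: "formula_in M (n + k) C \<psi>"
    "S = {(a, b). length a = n \<and> length b = k \<and> sat M (\<lambda>i. (a @ b) ! i) \<psi>}"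
    using assms unfolding Ldef2_def by auto
  obtain \<theta> where \<theta>: "formula_in M (n + k) C \<theta>"
    "T = {(a, b). length a = n \<and> length b = k \<and> sat M (\<lambda>i. (a @ b) ! i) \<theta>}"
    using assms unfolding Ldef2_def by auto
  have "formula_in M (n + k) C (FConj \<psi> \<theta>)" using \<psi>(1) \<theta>(1) unfolding formula_in_def by simp
  moreover have "S \<inter> T = {(a, b). length a = n \<and> length b = k \<and> sat M (\<lambda>i. (a @ b) ! i) (FConj \<psi> \<theta>)}"
    using \<psi>(2) \<theta>(2) by auto
  ultimately show ?thesis unfolding Ldef2_def by blast
qed

lemma Ldef2_mono: "S \<in> Ldef2 M n k C \<Longrightarrow> S \<in> Ldef2 M n k UNIV"
  unfolding Ldef2_def formula_in_def by auto

lemma Ldef2_sub: "S \<in> Ldef2 M n k C \<Longrightarrow> S \<subseteq> top2 n k"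
  unfolding Ldef2_def top2_def by auto

lemma cyl_x_Ldef2: assumes "S \<in> Ldef M n UNIV" shows "cyl_x k S \<in> Ldef2 M n k UNIV"
proof -
  obtain \<psi> where \<psi>: "formula_in M n UNIV \<psi>" "S = {a. length a = n \<and> sat M (\<lambda>i. a ! i) \<psi>}"
    using assms unfolding Ldef_def by auto
  have "formula_in M (n + k) UNIV \<psi>" using \<psi>(1) unfolding formula_in_def by auto
  moreover have "cyl_x k S = {(a, b). length a = n \<and> length b = k \<and> sat M (\<lambda>i. (a @ b) ! i) \<psi>}"
  proof -
    have "sat M (\<lambda>i. (a @ b) ! i) \<psi> = sat M (\<lambda>i. a ! i) \<psi>" if "length a = n" for a b
      using \<psi>(1) that unfolding formula_in_def by (intro sat_cong) (auto simp: nth_append)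
    then show ?thesis using \<psi>(2) unfolding cyl_x_def by auto
  qed
  ultimately show ?thesis unfolding Ldef2_def by blast
qed

lemma cyl_x_sub: "S \<in> Ldef M n C \<Longrightarrow> cyl_x k S \<subseteq> top2 n k"
  unfolding Ldef_def cyl_x_def top2_def by auto

lemma Ldef2_top: "top2 n k \<in> Ldef2 M n k C"
proof -
  have "formula_in M (n + k) C (FNeg FBot)" unfolding formula_in_def by simp
  moreover have "top2 n k = {(a, b). length a = n \<and> length b = k \<and> sat M (\<lambda>i. (a @ b) ! i) (FNeg FBot)}"
    unfolding top2_def by simp
  ultimately show ?thesis unfolding Ldef2_def by blast
qed

lemma Bxy_Ldef2: "X \<in> Bxy M n k A \<Longrightarrow> X \<in> Ldef2 M n k UNIV"
  by (induction rule: Bxy.induct) (auto intro: cyl_x_Ldef2 Ldef2_mono Ldef2_top Ldef2_compl Ldef2_inter)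

lemma Bxy_sub: "X \<in> Bxy M n k A \<Longrightarrow> X \<subseteq> top2 n k"
  by (induction rule: Bxy.induct) (auto dest: cyl_x_sub Ldef2_sub)

lemma Bxy_balg: "balg (Bxy M n k A) (top2 n k)"
  unfolding balg_def using Bxy_sub by (blast intro: Bxy.intros)

theorem proposition3p17:
  fixes M :: "('f,'r,'u) struc" and A :: "'u set" and n k :: nat
    and \<mu> :: "'u list set \<Rightarrow> real" and \<nu> :: "'u list set \<Rightarrow> real"
    and lam \<omega> :: "('u list \<times> 'u list) set \<Rightarrow> real"
    and \<phi> :: "'u list set" and \<epsilon> :: real
  assumes "Meas M n UNIV \<mu>"
    and "Meas M k UNIV \<nu>"
    and "Meas2 M n k A lam"
    and "witnesses M n k A lam \<mu> \<nu>"
    and "\<omega> \<in> E_set M n k A lam \<mu>"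
    and "\<phi> \<in> Ldef M k UNIV"
    and "\<epsilon> > 0"
  shows "\<exists>gm gp. gm \<in> Bxy M n k A \<and> gp \<in> Bxy M n k A
           \<and> gm \<subseteq> cyl_y n \<phi> \<and> cyl_y n \<phi> \<subseteq> gp
           \<and> \<omega> gp - \<omega> gm < \<epsilon>
           \<and> \<bar>\<omega> gp - \<nu> \<phi>\<bar> < \<epsilon> \<and> \<bar>\<omega> gm - \<nu> \<phi>\<bar> < \<epsilon>"
proof (rule ccontr)
  assume neg: "\<not> (\<exists>gm gp. gm \<in> Bxy M n k A \<and> gp \<in> Bxy M n k A
           \<and> gm \<subseteq> cyl_y n \<phi> \<and> cyl_y n \<phi> \<subseteq> gp
           \<and> \<omega> gp - \<omega> gm < \<epsilon>
           \<and> \<bar>\<omega> gp - \<nu> \<phi>\<bar> < \<epsilon> \<and> \<bar>\<omega> gm - \<nu> \<phi>\<bar> < \<epsilon>)"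
  define B where "B = Bxy M n k A"
  define \<Omega> where "\<Omega> = (top2 n k :: ('u list \<times> 'u list) set)"
  define S where "S = cyl_y n \<phi>"
  have alg: "balg B \<Omega>" unfolding B_def \<Omega>_def by (rule Bxy_balg)
  have om: "fa_prob (Ldef2 M n k UNIV) \<Omega> \<omega>" and omA: "\<forall>X\<in>Ldef2 M n k A. \<omega> X = lam X"
    and om\<mu>: "\<forall>X\<in>Ldef M n UNIV. \<omega> (cyl_x k X) = \<mu> X"
    using assms(5) unfolding E_set_def Meas2_def \<Omega>_def by auto
  have BL: "X \<in> Ldef2 M n k UNIV" if "X \<in> B" for X using that unfolding B_def by (rule Bxy_Ldef2)
  have BO: "X \<subseteq> \<Omega>" if "X \<in> B" for X using that unfolding B_def \<Omega>_def by (rule Bxy_sub)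
  have OB: "\<Omega> \<in> B" unfolding B_def \<Omega>_def by (rule Bxy.top)
  have omB: "fa_prob B \<Omega> \<omega>"
    using om BL OB unfolding fa_prob_def by blast
  have c0: "\<omega> S = \<nu> \<phi>" using assms(4,5,6) unfolding witnesses_def S_def by blast
  have Ssub: "S \<subseteq> \<Omega>" using assms(6) unfolding S_def \<Omega>_def cyl_y_def top2_def Ldef_def by auto
  have mono: "\<omega> G \<le> \<omega> H" if "G \<in> B" "H \<in> B" "G \<subseteq> H" for G H
  proof -
    have HG: "H \<inter> (\<Omega> - G) \<in> B" using alg that unfolding balg_def by blast
    have "H = G \<union> (H \<inter> (\<Omega> - G))" using that BO by blast
    moreover have "G \<inter> (H \<inter> (\<Omega> - G)) = {}" by blast
    ultimately have "\<omega> H = \<omega> G + \<omega> (H \<inter> (\<Omega> - G))" using omB that(1) HG unfolding fa_prob_def by metis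
    moreover have "0 \<le> \<omega> (H \<inter> (\<Omega> - G))" using omB HG unfolding fa_prob_def by blast
    ultimately show ?thesis by linarith
  qed
  have EQ: "Q S = \<nu> \<phi> \<and> Q \<Omega> = 1" if Q: "\<forall>X. 0 \<le> Q X" "\<forall>X Y. X \<inter> Y = {} \<longrightarrow> Q (X \<union> Y) = Q X + Q Y"
    "\<forall>X\<in>B. Q X = \<omega> X" for Q
  proof -
    have Q1: "Q \<Omega> = 1" using Q(3) OB omB unfolding fa_prob_def by simp
    have "Meas2 M n k UNIV Q" unfolding Meas2_def fa_prob_def
      using om Q1 Q(1,2) unfolding fa_prob_def \<Omega>_def by blast
    moreover have "\<forall>X\<in>Ldef2 M n k A. Q X = lam X"
      using Q(3) omA Bxy.par unfolding B_def by metis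
    moreover have "\<forall>X\<in>Ldef M n UNIV. Q (cyl_x k X) = \<mu> X"
      using Q(3) om\<mu> Bxy.cyl unfolding B_def by metis
    ultimately have "Q \<in> E_set M n k A lam \<mu>" unfolding E_set_def by blast
    then have "Q S = \<nu> \<phi>" using assms(4,6) unfolding witnesses_def S_def by blast
    then show ?thesis using Q1 by blast
  qed
  have cases: "(\<forall>G\<in>B. G \<subseteq> S \<longrightarrow> \<omega> G \<le> \<nu> \<phi> - \<epsilon>/2) \<or> (\<forall>H\<in>B. S \<subseteq> H \<longrightarrow> \<omega> H \<ge> \<nu> \<phi> + \<epsilon>/2)"
  proof (rule ccontr)
    assume "\<not> ?thesis"
    then obtain G H where G: "G \<in> B" "G \<subseteq> S" "\<omega> G > \<nu> \<phi> - \<epsilon>/2"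
      and H: "H \<in> B" "S \<subseteq> H" "\<omega> H < \<nu> \<phi> + \<epsilon>/2" by force
    have "\<omega> G \<le> \<omega> H" using mono G H by blast
    then have "G \<in> Bxy M n k A \<and> H \<in> Bxy M n k A
           \<and> G \<subseteq> cyl_y n \<phi> \<and> cyl_y n \<phi> \<subseteq> H
           \<and> \<omega> H - \<omega> G < \<epsilon>
           \<and> \<bar>\<omega> H - \<nu> \<phi>\<bar> < \<epsilon> \<and> \<bar>\<omega> G - \<nu> \<phi>\<bar> < \<epsilon>"
      using G H unfolding B_def S_def by (auto simp: abs_less_iff)
    then show False using neg by blast
  qed
  then show False
  proof
    assume c1: "\<forall>G\<in>B. G \<subseteq> S \<longrightarrow> \<omega> G \<le> \<nu> \<phi> - \<epsilon>/2"
    obtain Q where Q: "\<forall>X. 0 \<le> Q X" "\<forall>X Y. X \<inter> Y = {} \<longrightarrow> Q (X \<union> Y) = Q X + Q Y"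
      "\<forall>X\<in>B. Q X = \<omega> X" "Q S \<le> \<nu> \<phi> - \<epsilon>/2"
      using ext_step[OF alg omB c1] by blast
    then show False using EQ[OF Q(1-3)] assms(7) by linarith
  next
    assume c2: "\<forall>H\<in>B. S \<subseteq> H \<longrightarrow> \<omega> H \<ge> \<nu> \<phi> + \<epsilon>/2"
    have c2': "\<forall>G\<in>B. G \<subseteq> \<Omega> - S \<longrightarrow> \<omega> G \<le> 1 - \<nu> \<phi> - \<epsilon>/2"
    proof (intro ballI impI)
      fix G assume G: "G \<in> B" "G \<subseteq> \<Omega> - S"
      have HB: "\<Omega> - G \<in> B" using alg G unfolding balg_def by blast
      have "S \<subseteq> \<Omega> - G" using G Ssub by blast
      then have h: "\<omega> (\<Omega> - G) \<ge> \<nu> \<phi> + \<epsilon>/2" using c2 HB by blast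
      have "\<Omega> = G \<union> (\<Omega> - G)" using G BO by blast
      moreover have "G \<inter> (\<Omega> - G) = {}" by blast
      ultimately have "\<omega> \<Omega> = \<omega> G + \<omega> (\<Omega> - G)" using omB G(1) HB unfolding fa_prob_def by metis
      moreover have "\<omega> \<Omega> = 1" using omB unfolding fa_prob_def by blast
      ultimately show "\<omega> G \<le> 1 - \<nu> \<phi> - \<epsilon>/2" using h by linarith
    qed
    obtain Q where Q: "\<forall>X. 0 \<le> Q X" "\<forall>X Y. X \<inter> Y = {} \<longrightarrow> Q (X \<union> Y) = Q X + Q Y"
      "\<forall>X\<in>B. Q X = \<omega> X" "Q (\<Omega> - S) \<le> 1 - \<nu> \<phi> - \<epsilon>/2"
      using ext_step[OF alg omB c2'] by blast
    have e: "Q S = \<nu> \<phi> \<and> Q \<Omega> = 1" using EQ[OF Q(1-3)] .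
    have "\<Omega> = S \<union> (\<Omega> - S)" using Ssub by blast
    then have "Q \<Omega> = Q S + Q (\<Omega> - S)" using Q(2) by (metis Diff_disjoint)
    then show False using e Q(4) assms(7) by linarith
  qed
qed

end
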